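(* Let $f = \sigma_m \circ f_m \circ \sigma_{m-1} \circ f_{m-1} \circ \cdots \circ \sigma_1 \circ f_1$ be a CNN acting on bounded fields $\mathbb{Z}^2 \to \mathbb{R}$, where each $f_i(\bm{X}) = \bm{X} \ast K_i$ is a convolution with a finitely supported kernel $K_i \colon \mathbb{Z}^2 \to \mathbb{R}$ and each $\sigma_i \colon \mathbb{R} \to \mathbb{R}$ is a piecewise differentiable activation applied pointwise. If each combined layer $\sigma_i \circ f_i$ is equivariant with respect to arbitrary uniform motion (i.e. $(\sigma_i\circ f_i)(\bm{X} + \bm{C}) = (\sigma_i\circ f_i)(\bm{X}) + \bm{C}$ for all fields $\bm{X}$ and constant fields $\bm{C}$), then $f$ is an affine map.
   Context: Convolution: $(\bm{X}\ast K)(p) = \sum_{q \in \mathbb{Z}^2} \bm{X}(p+q)K(q)$. A constant field takes the same real value at every point of $\mathbb{Z}^2$. *)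

theory Defs
  imports "HOL-Analysis.Analysis"
begin

type_synonym field = "int \<times> int \<Rightarrow> real"

definition bounded_field :: "field \<Rightarrow> bool" where
  "bounded_field X \<longleftrightarrow> (\<exists>B. \<forall>p. \<bar>X p\<bar> \<le> B)"

definition finitely_supported :: "field \<Rightarrow> bool" where
  "finitely_supported K \<longleftrightarrow> finite {q. K q \<noteq> 0}"

definition conv :: "field \<Rightarrow> field \<Rightarrow> field" where
  "conv X K = (\<lambda>p. \<Sum>q\<in>{q. K q \<noteq> 0}. X (p + q) * K q)"

definition const_field :: "real \<Rightarrow> field" where
  "const_field c = (\<lambda>_. c)"

definition piecewise_differentiable :: "(real \<Rightarrow> real) \<Rightarrow> bool" where
  "piecewise_differentiable \<sigma> \<longleftrightarrow>
     (\<exists>S. (\<forall>a b. finite (S \<inter> {a..b})) \<and> (\<forall>x. x \<notin> S \<longrightarrow> \<sigma> differentiable (at x)))"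

definition layer :: "field \<Rightarrow> (real \<Rightarrow> real) \<Rightarrow> field \<Rightarrow> field" where
  "layer K \<sigma> X = (\<lambda>p. \<sigma> (conv X K p))"

text \<open>The CNN with layers [(K_1,sigma_1),...,(K_m,sigma_m)], layer 1 applied first.\<close>
definition cnn :: "(field \<times> (real \<Rightarrow> real)) list \<Rightarrow> field \<Rightarrow> field" where
  "cnn Ls X = foldl (\<lambda>Y (K, \<sigma>). layer K \<sigma> Y) X Ls"

definition equivariant_uniform_motion :: "(field \<Rightarrow> field) \<Rightarrow> bool" where
  "equivariant_uniform_motion g \<longleftrightarrow>
     (\<forall>X c. bounded_field X \<longrightarrow> g (\<lambda>p. X p + const_field c p) = (\<lambda>p. g X p + const_field c p))"

definition affine_on_bounded :: "(field \<Rightarrow> field) \<Rightarrow> bool" where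
  "affine_on_bounded g \<longleftrightarrow>
     (\<forall>X Y (t::real). bounded_field X \<longrightarrow> bounded_field Y \<longrightarrow>
        g (\<lambda>p. t * X p + (1 - t) * Y p) = (\<lambda>p. t * g X p + (1 - t) * g Y p))"

end

theory Submission
  imports Defs
begin

definition aff_all :: "(field \<Rightarrow> field) \<Rightarrow> bool" where
  "aff_all g \<longleftrightarrow> (\<forall>X Y (t::real). g (\<lambda>p. t * X p + (1 - t) * Y p) = (\<lambda>p. t * g X p + (1 - t) * g Y p))"

lemma conv_lin: "conv (\<lambda>p. t * X p + (1 - t) * Y p) K p = t * conv X K p + (1 - t) * conv Y K p"
proof -
  have "conv (\<lambda>p. t * X p + (1 - t) * Y p) K p = (\<Sum>q\<in>{q. K q \<noteq> 0}. t * (X (p + q) * K q) + (1 - t) * (Y (p + q) * K q))"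
    unfolding conv_def by (rule sum.cong) (auto simp: algebra_simps)
  also have "\<dots> = t * conv X K p + (1 - t) * conv Y K p"
    unfolding conv_def by (simp add: sum.distrib sum_distrib_left)
  finally show ?thesis .
qed

lemma layer_aff:
  assumes "equivariant_uniform_motion (layer K \<sigma>)"
  shows "aff_all (layer K \<sigma>)"
proof -
  define s where "s = (\<Sum>q\<in>{q. K q \<noteq> 0}. K q)"
  have bz: "bounded_field (\<lambda>_. 0)" unfolding bounded_field_def by auto
  have e: "\<And>c. \<sigma> (c * s) = \<sigma> 0 + c"
  proof -
    fix c
    from assms bz have "layer K \<sigma> (\<lambda>p. 0 + const_field c p) = (\<lambda>p. layer K \<sigma> (\<lambda>_. 0) p + const_field c p)"
      unfolding equivariant_uniform_motion_def by blast
    hence "layer K \<sigma> (\<lambda>p. 0 + const_field c p) (0,0) = layer K \<sigma> (\<lambda>_. 0) (0,0) + c"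
      by (metis const_field_def)
    thus "\<sigma> (c * s) = \<sigma> 0 + c"
      unfolding layer_def conv_def const_field_def s_def by (simp add: sum_distrib_left)
  qed
  have sne: "s \<noteq> 0" using e[of 1] by auto
  have sig: "\<And>y. \<sigma> y = \<sigma> 0 + y / s"
  proof -
    fix y
    have "\<sigma> ((y / s) * s) = \<sigma> 0 + y / s" by (rule e)
    thus "\<sigma> y = \<sigma> 0 + y / s" using sne by simp
  qed
  show ?thesis unfolding aff_all_def layer_def
  proof (intro allI ext)
    fix X Y t p
    show "\<sigma> (conv (\<lambda>p. t * X p + (1 - t) * Y p) K p) = t * \<sigma> (conv X K p) + (1 - t) * \<sigma> (conv Y K p)"
      unfolding conv_lin sig[of "t * conv X K p + (1 - t) * conv Y K p"] sig[of "conv X K p"] sig[of "conv Y K p"]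
      using sne by (simp add: field_simps)
  qed
qed

lemma cnn_aff:
  "\<forall>(K, \<sigma>) \<in> set Ls. equivariant_uniform_motion (layer K \<sigma>) \<Longrightarrow> aff_all (cnn Ls)"
proof (induction Ls)
  case Nil
  then show ?case unfolding aff_all_def cnn_def by simp
next
  case (Cons L Ls)
  obtain K \<sigma> where L: "L = (K, \<sigma>)" by fastforce
  have a1: "aff_all (layer K \<sigma>)" using Cons.prems L layer_aff by auto
  have a2: "aff_all (cnn Ls)" using Cons by auto
  have c: "cnn (L # Ls) = (\<lambda>X. cnn Ls (layer K \<sigma> X))" unfolding cnn_def L by (rule ext) simp
  show ?case unfolding c aff_all_def
  proof (intro allI)
    fix X Y t
    show "cnn Ls (layer K \<sigma> (\<lambda>p. t * X p + (1 - t) * Y p)) = (\<lambda>p. t * cnn Ls (layer K \<sigma> X) p + (1 - t) * cnn Ls (layer K \<sigma> Y) p)"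
      using a1 a2 unfolding aff_all_def by simp
  qed
qed

theorem mainTheorem7:
  fixes Ls :: "(field \<times> (real \<Rightarrow> real)) list"
  assumes "\<forall>(K, \<sigma>) \<in> set Ls. finitely_supported K"
    and "\<forall>(K, \<sigma>) \<in> set Ls. piecewise_differentiable \<sigma>"
    and "\<forall>(K, \<sigma>) \<in> set Ls. equivariant_uniform_motion (layer K \<sigma>)"
  shows "affine_on_bounded (cnn Ls)"
  using cnn_aff[OF assms(3)] unfolding aff_all_def affine_on_bounded_def by blast

end
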